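(* (1) Let $\mathfrak{F}$ be crisp. Then $\mathfrak{F}$ is finitely branching (i.e., $R(w)$ is finite for every $w\in\mathfrak{F}$) iff $\mathfrak{F}\models_{\mathbf{K}\mathsf{biG}}\mathbf{1}\ominus\lozenge((p\ominus q)\wedge q)$. (2) Let $\mathfrak{F}$ be fuzzy. Then $\mathfrak{F}$ is finitely branching and $\sup\{wRw':wRw'<1\}<1$ for all $w\in\mathfrak{F}$ iff $\mathfrak{F}\models_{\mathbf{K}\mathsf{biG}}\mathbf{1}\ominus\lozenge((p\ominus q)\wedge q)$.
   Context: $\ominus$ is Gödel coimplication: $b\ominus_\mathsf{G}a=0$ if $b\le a$, and $b$ otherwise; $a\rightarrow_\mathsf{G}b=1$ if $a\le b$, else $b$; $\wedge_\mathsf{G}=\min$, $\vee_\mathsf{G}=\max$; $\mathbf{1}:=p\rightarrow p$. A crisp frame is $\langle W,R\rangle$ with $R\subseteq W\times W$ and $R(w)=\{w':wRw'\}$; a fuzzy frame has $R:W\times W\to[0,1]$ and $R(w)=\{w':wRw'=1\}$. A $\mathbf{K}\mathsf{biG}$ model adds $v:\mathsf{Var}\times W\to[0,1]$, extended by the Gödel operations; on fuzzy frames $v(\lozenge\phi,w)=\sup_{w'}\{wRw'\wedge_\mathsf{G}v(\phi,w')\}$ and $v(\Box\phi,w)=\inf_{w'}\{wRw'\rightarrow_\mathsf{G}v(\phi,w')\}$; on crisp frames $v(\lozenge\phi,w)=\sup\{v(\phi,w'):wRw'\}$, $v(\Box\phi,w)=\inf\{v(\phi,w'):wRw'\}$ ($\sup\varnothing=0$,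 $\inf\varnothing=1$). $\mathfrak{F}\models_{\mathbf{K}\mathsf{biG}}\phi$ iff $v(\phi,w)=1$ for all $w$ and all models on $\mathfrak{F}$. *)

theory Defs
  imports Main "HOL.Real"
begin

datatype fm = Var nat | Bot | Top | And fm fm | Or fm fm | Imp fm fm | Coimp fm fm
  | Box fm | Dia fm

definition gimp :: "real \<Rightarrow> real \<Rightarrow> real" where
  "gimp a b = (if a \<le> b then 1 else b)"
definition gcoimp :: "real \<Rightarrow> real \<Rightarrow> real" where
  "gcoimp b a = (if b \<le> a then 0 else b)"

definition gsup :: "real set \<Rightarrow> real" where
  "gsup S = (if S = {} then 0 else Sup S)"
definition ginf :: "real set \<Rightarrow> real" where
  "ginf S = (if S = {} then 1 else Inf S)"

fun cval :: "('w \<Rightarrow> 'w \<Rightarrow> bool) \<Rightarrow> (nat \<Rightarrow> 'w \<Rightarrow> real) \<Rightarrow> fm \<Rightarrow> 'w \<Rightarrow> real" where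
  "cval R v (Var p) w = v p w"
| "cval R v Bot w = 0"
| "cval R v Top w = 1"
| "cval R v (And a b) w = min (cval R v a w) (cval R v b w)"
| "cval R v (Or a b) w = max (cval R v a w) (cval R v b w)"
| "cval R v (Imp a b) w = gimp (cval R v a w) (cval R v b w)"
| "cval R v (Coimp a b) w = gcoimp (cval R v a w) (cval R v b w)"
| "cval R v (Dia a) w = gsup {cval R v a w' | w'. R w w'}"
| "cval R v (Box a) w = ginf {cval R v a w' | w'. R w w'}"

fun fval :: "('w \<Rightarrow> 'w \<Rightarrow> real) \<Rightarrow> (nat \<Rightarrow> 'w \<Rightarrow> real) \<Rightarrow> fm \<Rightarrow> 'w \<Rightarrow> real" where
  "fval R v (Var p) w = v p w"
| "fval R v Bot w = 0"
| "fval R v Top w = 1"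
| "fval R v (And a b) w = min (fval R v a w) (fval R v b w)"
| "fval R v (Or a b) w = max (fval R v a w) (fval R v b w)"
| "fval R v (Imp a b) w = gimp (fval R v a w) (fval R v b w)"
| "fval R v (Coimp a b) w = gcoimp (fval R v a w) (fval R v b w)"
| "fval R v (Dia a) w = gsup {min (R w w') (fval R v a w') | w'. True}"
| "fval R v (Box a) w = ginf {gimp (R w w') (fval R v a w') | w'. True}"

definition valuation :: "(nat \<Rightarrow> 'w \<Rightarrow> real) \<Rightarrow> bool" where
  "valuation v \<longleftrightarrow> (\<forall>p w. 0 \<le> v p w \<and> v p w \<le> 1)"

definition fuzzy_frame :: "('w \<Rightarrow> 'w \<Rightarrow> real) \<Rightarrow> bool" where
  "fuzzy_frame R \<longleftrightarrow> (\<forall>w w'. 0 \<le> R w w' \<and> R w w' \<le> 1)"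

definition crisp_valid :: "('w \<Rightarrow> 'w \<Rightarrow> bool) \<Rightarrow> fm \<Rightarrow> bool" where
  "crisp_valid R \<phi> \<longleftrightarrow> (\<forall>v. valuation v \<longrightarrow> (\<forall>w. cval R v \<phi> w = 1))"

definition fuzzy_valid :: "('w \<Rightarrow> 'w \<Rightarrow> real) \<Rightarrow> fm \<Rightarrow> bool" where
  "fuzzy_valid R \<phi> \<longleftrightarrow> (\<forall>v. valuation v \<longrightarrow> (\<forall>w. fval R v \<phi> w = 1))"

text \<open>R(w) = successors; for fuzzy frames those with degree exactly 1\<close>
definition crisp_fin_branching :: "('w \<Rightarrow> 'w \<Rightarrow> bool) \<Rightarrow> bool" where
  "crisp_fin_branching R \<longleftrightarrow> (\<forall>w. finite {w'. R w w'})"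

definition fuzzy_fin_branching :: "('w \<Rightarrow> 'w \<Rightarrow> real) \<Rightarrow> bool" where
  "fuzzy_fin_branching R \<longleftrightarrow> (\<forall>w. finite {w'. R w w' = 1})"

definition one_fm :: fm where "one_fm = Imp (Var 0) (Var 0)"

definition fb_formula :: fm where
  "fb_formula = Coimp one_fm (Dia (And (Coimp (Var 0) (Var 1)) (Var 1)))"

end

theory Submission
  imports Defs
begin

lemma crisp_val: "cval R v fb_formula w =
  (if 1 \<le> gsup ((\<lambda>w'. min (gcoimp (v 0 w') (v 1 w')) (v 1 w')) ` {w'. R w w'}) then 0 else 1)"
proof -
  have "{cval R v (And (Coimp (Var 0) (Var 1)) (Var 1)) w' | w'. R w w'}
      = (\<lambda>w'. min (gcoimp (v 0 w') (v 1 w')) (v 1 w')) ` {w'. R w w'}" by auto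
  then show ?thesis by (simp add: fb_formula_def one_fm_def gimp_def gcoimp_def)
qed

lemma fuzzy_val: "fval R v fb_formula w =
  (if 1 \<le> gsup ((\<lambda>w'. min (R w w') (min (gcoimp (v 0 w') (v 1 w')) (v 1 w'))) ` UNIV) then 0 else 1)"
proof -
  have "{min (R w w') (fval R v (And (Coimp (Var 0) (Var 1)) (Var 1)) w') | w'. True}
      = (\<lambda>w'. min (R w w') (min (gcoimp (v 0 w') (v 1 w')) (v 1 w'))) ` UNIV" by auto
  then show ?thesis by (simp add: fb_formula_def one_fm_def gimp_def gcoimp_def)
qed

lemma inner_lt: "a \<le> 1 \<Longrightarrow> min (gcoimp a b) b < 1"
  by (auto simp: gcoimp_def)

lemma inner_one: "0 \<le> b \<Longrightarrow> b < 1 \<Longrightarrow> min (gcoimp 1 b) b = b"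
  by (auto simp: gcoimp_def)

lemma gsup_fin_lt: "finite A \<Longrightarrow> \<forall>x\<in>A. f x < (1::real) \<Longrightarrow> gsup (f ` A) < 1"
proof -
  assume A: "finite A" "\<forall>x\<in>A. f x < (1::real)"
  show ?thesis
  proof (cases "A = {}")
    case True then show ?thesis by (simp add: gsup_def)
  next
    case False
    have "Sup (f ` A) = Max (f ` A)" using A False by (simp add: cSup_eq_Max)
    moreover have "Max (f ` A) \<in> f ` A" using A False by (intro Max_in) auto
    ultimately show ?thesis using A False by (auto simp: gsup_def)
  qed
qed

lemma gsup_upper: "x \<in> S \<Longrightarrow> \<forall>y\<in>S. y \<le> (1::real) \<Longrightarrow> x \<le> gsup S"
  unfolding gsup_def by (auto intro!: cSup_upper bdd_aboveI)

lemma gsup_least: "S \<noteq> {} \<Longrightarrow> \<forall>y\<in>S. y \<le> (m::real) \<Longrightarrow> gsup S \<le> m"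
  unfolding gsup_def by (auto intro!: cSup_least)

lemma inf_seq:
  assumes "infinite (A :: 'w set)"
  shows "\<exists>q. (\<forall>x. 0 \<le> q x \<and> q x < (1::real)) \<and> (\<forall>e>0. \<exists>x\<in>A. q x > 1 - e)"
proof -
  obtain f :: "nat \<Rightarrow> 'w" where f: "inj f" "range f \<subseteq> A"
    using infinite_countable_subset[OF assms] by blast
  define q where "q x = 1 - 1 / (real (inv f x) + 2)" for x
  have "\<forall>x. 0 \<le> q x \<and> q x < 1" by (auto simp: q_def)
  moreover have "\<exists>x\<in>A. q x > 1 - e" if e: "e > 0" for e
  proof -
    obtain n where n: "n > 0" "inverse (real n) < e" using e ex_inverse_of_nat_less by blast
    have "1 / (real n + 2) < inverse (real n)" using n(1)
      by (simp add: divide_simps)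
    then have "q (f n) > 1 - e" using n f(1) by (simp add: q_def)
    then show ?thesis using f(2) by blast
  qed
  ultimately show ?thesis by blast
qed

lemma gsup_ge1: "\<forall>y\<in>S. y \<le> (1::real) \<Longrightarrow> \<forall>e>0. \<exists>x\<in>S. x > 1 - e \<Longrightarrow> 1 \<le> gsup S"
proof (rule ccontr)
  assume a: "\<forall>y\<in>S. y \<le> (1::real)" "\<forall>e>0. \<exists>x\<in>S. x > 1 - e" "\<not> 1 \<le> gsup S"
  have "1 - gsup S > 0" using a(3) by linarith
  then obtain x where "x \<in> S" "x > 1 - (1 - gsup S)" using a(2) by blast
  then show False using gsup_upper[OF _ a(1)] by force
qed

theorem theorem2:
  shows "(\<forall>R :: 'w \<Rightarrow> 'w \<Rightarrow> bool.
            crisp_fin_branching R \<longleftrightarrow> crisp_valid R fb_formula)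
       \<and> (\<forall>R :: 'w \<Rightarrow> 'w \<Rightarrow> real. fuzzy_frame R \<longrightarrow>
            ((fuzzy_fin_branching R \<and> (\<forall>w. gsup {R w w' | w'. R w w' < 1} < 1))
              \<longleftrightarrow> fuzzy_valid R fb_formula))"
proof (intro conjI allI impI)
  fix R :: "'w \<Rightarrow> 'w \<Rightarrow> bool"
  show "crisp_fin_branching R \<longleftrightarrow> crisp_valid R fb_formula"
  proof
    assume fb: "crisp_fin_branching R"
    show "crisp_valid R fb_formula"
      unfolding crisp_valid_def
    proof (intro allI impI)
      fix v :: "nat \<Rightarrow> 'w \<Rightarrow> real" and w
      assume "valuation v"
      then have "\<forall>x\<in>{w'. R w w'}. min (gcoimp (v 0 x) (v 1 x)) (v 1 x) < 1"
        by (auto simp: valuation_def intro: inner_lt)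
      then have "gsup ((\<lambda>w'. min (gcoimp (v 0 w') (v 1 w')) (v 1 w')) ` {w'. R w w'}) < 1"
        using fb by (intro gsup_fin_lt) (auto simp: crisp_fin_branching_def)
      then show "cval R v fb_formula w = 1" by (simp add: crisp_val)
    qed
  next
    assume val: "crisp_valid R fb_formula"
    show "crisp_fin_branching R"
    proof (rule ccontr)
      assume "\<not> crisp_fin_branching R"
      then obtain w where inf: "infinite {w'. R w w'}" by (auto simp: crisp_fin_branching_def)
      obtain q where q: "\<forall>x. 0 \<le> q x \<and> q x < (1::real)" "\<forall>e>0. \<exists>x\<in>{w'. R w w'}. q x > 1 - e"
        using inf_seq[OF inf] by blast
      define v :: "nat \<Rightarrow> 'w \<Rightarrow> real" where "v n x = (if n = 0 then 1 else q x)" for n x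
      have vv: "valuation v" using q(1) by (auto simp: valuation_def v_def less_imp_le)
      have inn: "min (gcoimp (v 0 x) (v 1 x)) (v 1 x) = q x" for x
        using q(1) by (simp add: v_def inner_one)
      have "1 \<le> gsup ((\<lambda>w'. min (gcoimp (v 0 w') (v 1 w')) (v 1 w')) ` {w'. R w w'})"
        unfolding inn using q by (intro gsup_ge1) (auto simp: less_imp_le)
      then have "cval R v fb_formula w = 0" by (simp add: crisp_val)
      then show False using val vv by (auto simp: crisp_valid_def)
    qed
  qed
next
  fix R :: "'w \<Rightarrow> 'w \<Rightarrow> real"
  assume ff: "fuzzy_frame R"
  show "(fuzzy_fin_branching R \<and> (\<forall>w. gsup {R w w' | w'. R w w' < 1} < 1))
              \<longleftrightarrow> fuzzy_valid R fb_formula"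
  proof
    assume a: "fuzzy_fin_branching R \<and> (\<forall>w. gsup {R w w' | w'. R w w' < 1} < 1)"
    show "fuzzy_valid R fb_formula"
      unfolding fuzzy_valid_def
    proof (intro allI impI)
      fix v :: "nat \<Rightarrow> 'w \<Rightarrow> real" and w
      assume "valuation v"
      define g where "g x = min (gcoimp (v 0 x) (v 1 x)) (v 1 x)" for x
      have g1: "g x < 1" for x using \<open>valuation v\<close> by (auto simp: valuation_def g_def intro: inner_lt)
      define A where "A = {w'. R w w' = 1}"
      have fA: "finite A" using a by (auto simp: A_def fuzzy_fin_branching_def)
      define s where "s = gsup {R w w' | w'. R w w' < 1}"
      have s1: "s < 1" using a by (simp add: s_def)
      define m where "m = max (gsup (g ` A)) s"
      have m1: "m < 1" using gsup_fin_lt[OF fA, of g] g1 s1 by (simp add: m_def)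
      have "\<forall>y\<in>(\<lambda>w'. min (R w w') (g w')) ` UNIV. y \<le> m"
      proof
        fix y assume "y \<in> (\<lambda>w'. min (R w w') (g w')) ` UNIV"
        then obtain x where y: "y = min (R w x) (g x)" by blast
        show "y \<le> m"
        proof (cases "R w x = 1")
          case True
          then have "x \<in> A" by (simp add: A_def)
          then have "g x \<le> gsup (g ` A)"
            by (intro gsup_upper) (auto simp: less_imp_le g1)
          then show ?thesis using y by (auto simp: m_def)
        next
          case False
          then have "R w x < 1" using ff by (auto simp: fuzzy_frame_def less_le)
          then have "R w x \<le> s" unfolding s_def
            using ff by (intro gsup_upper) (auto simp: fuzzy_frame_def)
          then show ?thesis using y by (auto simp: m_def)
        qed
      qed
      then have "gsup ((\<lambda>w'. min (R w w') (g w')) ` UNIV) \<le> m"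
        by (intro gsup_least) auto
      moreover have eq: "(\<lambda>w'. min (R w w') (min (gcoimp (v 0 w') (v 1 w')) (v 1 w')))
          = (\<lambda>w'. min (R w w') (g w'))" by (simp add: g_def)
      ultimately show "fval R v fb_formula w = 1" using m1 unfolding fuzzy_val eq by simp
    qed
  next
    assume val: "fuzzy_valid R fb_formula"
    show "fuzzy_fin_branching R \<and> (\<forall>w. gsup {R w w' | w'. R w w' < 1} < 1)"
    proof (intro conjI allI)
      show "fuzzy_fin_branching R"
      proof (rule ccontr)
        assume "\<not> fuzzy_fin_branching R"
        then obtain w where inf: "infinite {w'. R w w' = 1}" by (auto simp: fuzzy_fin_branching_def)
        obtain q where q: "\<forall>x. 0 \<le> q x \<and> q x < (1::real)" "\<forall>e>0. \<exists>x\<in>{w'. R w w' = 1}. q x > 1 - e"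
          using inf_seq[OF inf] by blast
        define v :: "nat \<Rightarrow> 'w \<Rightarrow> real" where "v n x = (if n = 0 then 1 else q x)" for n x
        have vv: "valuation v" using q(1) by (auto simp: valuation_def v_def less_imp_le)
        have inn: "min (gcoimp (v 0 x) (v 1 x)) (v 1 x) = q x" for x
          using q(1) by (simp add: v_def inner_one)
        have "1 \<le> gsup ((\<lambda>w'. min (R w w') (min (gcoimp (v 0 w') (v 1 w')) (v 1 w'))) ` UNIV)"
          unfolding inn
        proof (intro gsup_ge1)
          show "\<forall>y\<in>range (\<lambda>w'. min (R w w') (q w')). y \<le> 1" using ff
            by (auto simp: fuzzy_frame_def min_le_iff_disj)
          show "\<forall>e>0. \<exists>x\<in>range (\<lambda>w'. min (R w w') (q w')). 1 - e < x"
          proof (intro allI impI)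
            fix e :: real assume "e > 0"
            then obtain x where "R w x = 1" "q x > 1 - e" using q(2) by blast
            moreover have "q x \<le> 1" using q(1) less_imp_le by blast
            ultimately show "\<exists>x\<in>range (\<lambda>w'. min (R w w') (q w')). 1 - e < x"
              by (intro bexI[of _ "min (R w x) (q x)"]) (auto intro!: image_eqI[of _ _ x])
          qed
        qed
        then have "fval R v fb_formula w = 0" by (simp add: fuzzy_val)
        then show False using val vv by (auto simp: fuzzy_valid_def)
      qed
    next
      fix w
      show "gsup {R w w' | w'. R w w' < 1} < 1"
      proof (rule ccontr)
        assume ge: "\<not> gsup {R w w' | w'. R w w' < 1} < 1"
        define q where "q x = (if R w x < 1 then R w x else 0)" for x
        define v :: "nat \<Rightarrow> 'w \<Rightarrow> real" where "v n x = (if n = 0 then 1 else q x)" for n x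
        have q01: "0 \<le> q x \<and> q x < 1" for x using ff by (auto simp: q_def fuzzy_frame_def)
        have vv: "valuation v" using q01 by (auto simp: valuation_def v_def less_imp_le)
        have inn: "min (gcoimp (v 0 x) (v 1 x)) (v 1 x) = q x" for x
          using q01 by (simp add: v_def inner_one)
        let ?S = "range (\<lambda>w'. min (R w w') (q w'))"
        have sub: "{R w w' | w'. R w w' < 1} \<subseteq> ?S"
        proof
          fix y assume "y \<in> {R w w' | w'. R w w' < 1}"
          then obtain x where "y = R w x" "R w x < 1" by blast
          then show "y \<in> ?S" by (intro image_eqI[of _ _ x]) (auto simp: q_def)
        qed
        have b1: "\<forall>y\<in>?S. y \<le> 1" using ff by (auto simp: fuzzy_frame_def min_le_iff_disj)
        have ne: "{R w w' | w'. R w w' < 1} \<noteq> {}" using ge by (auto simp: gsup_def split: if_splits)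
        have "gsup {R w w' | w'. R w w' < 1} \<le> gsup ?S"
          using ne sub b1 unfolding gsup_def
          by (auto intro!: cSup_subset_mono bdd_aboveI)
        then have "1 \<le> gsup ?S" using ge by linarith
        then have "fval R v fb_formula w = 0" unfolding fuzzy_val inn by simp
        then show False using val vv by (auto simp: fuzzy_valid_def)
      qed
    qed
  qed
qed

end
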